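(* For every $z\in\mathbb{C}$ with $|z|>1$, $$\sum_{n=0}^{\infty}\frac{(-1)^{m_n}}{p_n(z)}=1-\frac1z .$$
   Context: For $n\ge0$ and $z\in\mathbb{C}$, $p_n(z)=\frac12\sum_{i=0}^{n}\left(1-(-1)^{\binom{n}{i}}\right)z^i$, i.e. the sum of $z^i$ over those $i\in\{0,\dots,n\}$ with $\binom{n}{i}$ odd. $(m_n)_{n\ge0}=0,1,1,0,1,0,0,1,\dots$ is the Thue–Morse sequence: $m_n\equiv s(n)\pmod 2$, where $s(n)$ is the number of $1$'s in the binary expansion of $n$. *)

theory Defs
  imports Complex_Main
begin

fun bitcount :: "nat \<Rightarrow> nat" where
  "bitcount n = (if n = 0 then 0 else n mod 2 + bitcount (n div 2))"

declare bitcount.simps[simp del]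

definition thue_morse :: "nat \<Rightarrow> nat" where
  "thue_morse n = bitcount n mod 2"

definition p :: "nat \<Rightarrow> complex \<Rightarrow> complex" where
  "p n z = (1/2) * (\<Sum>i=0..n. (1 - (-1) ^ (n choose i)) * z ^ i)"

end

theory Submission
  imports Defs
begin

lemma binom_par:
  "(odd ((2*j) choose (2*i)) \<longleftrightarrow> odd (j choose i)) \<and> even ((2*j) choose (2*i+1)) \<and>
   (odd ((2*j+1) choose (2*i)) \<longleftrightarrow> odd (j choose i)) \<and>
   (odd ((2*j+1) choose (2*i+1)) \<longleftrightarrow> odd (j choose i))"
proof (induction j arbitrary: i)
  case 0
  then show ?case by (cases i) auto
next
  case (Suc j)
  have A: "odd ((2*j+1) choose (2*i)) \<longleftrightarrow> odd (j choose i)" for i using Suc by blast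
  have B: "odd ((2*j+1) choose (2*i+1)) \<longleftrightarrow> odd (j choose i)" for i using Suc by blast
  have c1: "odd ((2*Suc j) choose (2*i)) \<longleftrightarrow> odd (Suc j choose i)" for i
  proof (cases i)
    case 0 then show ?thesis by simp
  next
    case (Suc k)
    have "(2*Suc j) choose (2*i) = ((2*j+1) choose (2*k+1)) + ((2*j+1) choose (2*k+2))"
      using Suc by simp
    moreover have "(2*j+1) choose (2*k+2) = (2*j+1) choose (2*(k+1))" by simp
    moreover have "Suc j choose i = (j choose k) + (j choose (k+1))" using Suc by simp
    ultimately show ?thesis using A[of "k+1"] B[of k] by auto
  qed
  have c2: "even ((2*Suc j) choose (2*i+1))" for i
  proof -
    have "(2*Suc j) choose (2*i+1) = ((2*j+1) choose (2*i)) + ((2*j+1) choose (2*i+1))" by simp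
    then show ?thesis using A[of i] B[of i] by auto
  qed
  have c3: "odd ((2*Suc j+1) choose (2*i)) \<longleftrightarrow> odd (Suc j choose i)"
  proof (cases i)
    case 0 then show ?thesis by simp
  next
    case (Suc k)
    have "(2*Suc j+1) choose (2*i) = ((2*Suc j) choose (2*k+1)) + ((2*Suc j) choose (2*i))"
      using Suc by simp
    then show ?thesis using c1 c2[of k] by auto
  qed
  have c4: "odd ((2*Suc j+1) choose (2*i+1)) \<longleftrightarrow> odd (Suc j choose i)"
  proof -
    have "(2*Suc j+1) choose (2*i+1) = ((2*Suc j) choose (2*i)) + ((2*Suc j) choose (2*i+1))" by simp
    then show ?thesis using c1 c2[of i] by auto
  qed
  show ?case using c1 c2 c3 c4 by blast
qed


lemma neg1_pow: "(-1::complex) ^ c = (if even c then 1 else -1)"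
  by (simp add: minus_one_power_iff)

lemma p_alt: assumes "n < M"
  shows "p n z = (\<Sum>i<M. if odd (n choose i) then z^i else 0)"
proof -
  have "p n z = (\<Sum>i=0..n. if odd (n choose i) then z^i else 0)"
    unfolding p_def sum_distrib_left by (intro sum.cong) (auto simp: neg1_pow)
  also have "\<dots> = (\<Sum>i<M. if odd (n choose i) then z^i else 0)"
    using assms by (intro sum.mono_neutral_left) (auto simp: binomial_eq_0)
  finally show ?thesis .
qed

lemma sum_split2: fixes M :: nat shows "(\<Sum>i<2*M. f i) = (\<Sum>j<M. f (2*j) + f (2*j+1))"
  by (induction M) (auto simp: sum.distrib add_ac)

lemma p_even: "p (2*j) z = p j (z^2)"
proof -
  have "p (2*j) z = (\<Sum>i<2*(2*j+1). if odd ((2*j) choose i) then z^i else 0)"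
    by (rule p_alt) simp
  also have "\<dots> = (\<Sum>i<2*j+1. if odd (j choose i) then (z^2)^i else 0)"
    unfolding sum_split2
  proof (intro sum.cong refl)
    fix i
    have "odd ((2*j) choose (2*i)) \<longleftrightarrow> odd (j choose i)" "even ((2*j) choose (2*i+1))"
      using binom_par by blast+
    note h = this
    show "(if odd ((2*j) choose (2*i)) then z^(2*i) else 0) + (if odd ((2*j) choose (2*i+1)) then z^(2*i+1) else 0)
        = (if odd (j choose i) then (z^2)^i else 0)"
      by (simp only: h) (simp add: power_mult[symmetric])
  qed
  also have "\<dots> = p j (z^2)" by (rule p_alt[symmetric]) simp
  finally show ?thesis .
qed

lemma p_odd: "p (2*j+1) z = (1+z) * p j (z^2)"
proof -
  have "p (2*j+1) z = (\<Sum>i<2*(2*j+2). if odd ((2*j+1) choose i) then z^i else 0)"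
    by (rule p_alt) simp
  also have "\<dots> = (\<Sum>i<2*j+2. (1+z) * (if odd (j choose i) then (z^2)^i else 0))"
    unfolding sum_split2
  proof (intro sum.cong refl)
    fix i
    have "odd ((2*j+1) choose (2*i)) \<longleftrightarrow> odd (j choose i)" "odd ((2*j+1) choose (2*i+1)) \<longleftrightarrow> odd (j choose i)"
      using binom_par by blast+
    note h = this
    show "(if odd ((2*j+1) choose (2*i)) then z^(2*i) else 0) + (if odd ((2*j+1) choose (2*i+1)) then z^(2*i+1) else 0)
        = (1+z) * (if odd (j choose i) then (z^2)^i else 0)"
      by (simp only: h) (simp add: power_mult[symmetric] algebra_simps)
  qed
  also have "\<dots> = (1+z) * p j (z^2)"
  proof -
    have "p j (z^2) = (\<Sum>i<2*j+2. if odd (j choose i) then (z^2)^i else 0)" by (rule p_alt) simp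
    then show ?thesis by (simp only: sum_distrib_left)
  qed
  finally show ?thesis .
qed

lemma p0: "p 0 z = 1" by (simp add: p_def)

lemma bc0: "bitcount 0 = 0" by (subst bitcount.simps) simp
lemma bc_even: "bitcount (2*j) = bitcount j"
  by (subst bitcount.simps) (auto simp: bc0)
lemma bc_odd: "bitcount (Suc (2*j)) = Suc (bitcount j)"
  by (subst bitcount.simps) auto

lemma tm_even: "(-1::complex) ^ thue_morse (2*j) = (-1) ^ thue_morse j"
  by (simp add: thue_morse_def bc_even)
lemma tm_odd: "(-1::complex) ^ thue_morse (2*j+1) = - ((-1) ^ thue_morse j)"
  by (simp add: thue_morse_def bc_odd neg1_pow)


definition f :: "complex \<Rightarrow> nat \<Rightarrow> complex" where
  "f z n = (-1) ^ thue_morse n / p n z"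

lemma T_step: "(\<Sum>n<2^Suc N. f z n) = (1 - 1/(1+z)) * (\<Sum>n<2^N. f (z^2) n)"
proof -
  have "(\<Sum>n<2^Suc N. f z n) = (\<Sum>j<2^N. f z (2*j) + f z (2*j+1))"
    using sum_split2[of "f z" "2^N"] by simp
  also have "\<dots> = (\<Sum>j<2^N. (1 - 1/(1+z)) * f (z^2) j)"
  proof (intro sum.cong refl)
    fix j
    show "f z (2*j) + f z (2*j+1) = (1 - 1/(1+z)) * f (z^2) j"
      unfolding f_def p_even p_odd tm_even tm_odd
      by (simp add: divide_inverse inverse_mult_distrib, simp add: algebra_simps)
  qed
  finally show ?thesis by (simp add: sum_distrib_left)
qed

lemma T_closed: "norm z > 1 \<Longrightarrow> (\<Sum>n<2^N. f z n) = (1 - 1/z) / (1 - (1/z)^(2^N))"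
proof (induction N arbitrary: z)
  case 0
  have "z \<noteq> 1" using 0 by auto
  then have "1 - 1/z \<noteq> 0" using 0 by (auto simp: field_simps)
  then show ?case by (simp add: f_def p0 thue_morse_def bc0)
next
  case (Suc N)
  have z0: "z \<noteq> 0" using Suc.prems by auto
  have z1: "1 + z \<noteq> 0"
  proof
    assume "1 + z = 0" then have "z = -1" by (simp add: add_eq_0_iff)
    then show False using Suc.prems by simp
  qed
  have "norm (z^2) > 1" using Suc.prems
    by (simp add: norm_power)
  then have "(\<Sum>n<2^Suc N. f z n) = (1 - 1/(1+z)) * ((1 - 1/z^2) / (1 - (1/z^2)^(2^N)))"
    using T_step Suc.IH by simp
  also have "(1/z^2)^(2^N) = (1/z)^(2^Suc N)"
    by (simp add: power_mult[symmetric] power_divide mult.commute)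
  also have "(1 - 1/(1+z)) * (1 - 1/z^2) = 1 - 1/z"
  proof -
    have e1: "1 - 1/(1+z) = z/(1+z)" using z1 by (simp add: field_simps)
    have e2: "1 - 1/z^2 = (z-1)*(1+z)/z^2" using z0 by (simp add: field_simps power2_eq_square)
    have e3: "1 - 1/z = (z-1)/z" using z0 by (simp add: field_simps)
    show ?thesis unfolding e1 e2 e3 using z0 z1 by (simp add: power2_eq_square)
  qed
  ultimately show ?case by simp
qed

lemma A_step: "(\<Sum>n<2^Suc N. norm (f z n)) = (1 + 1/norm(1+z)) * (\<Sum>n<2^N. norm (f (z^2) n))"
proof -
  have "(\<Sum>n<2^Suc N. norm (f z n)) = (\<Sum>j<2^N. norm (f z (2*j)) + norm (f z (2*j+1)))"
    using sum_split2[of "\<lambda>n. norm (f z n)" "2^N"] by simp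
  also have "\<dots> = (\<Sum>j<2^N. (1 + 1/norm(1+z)) * norm (f (z^2) j))"
  proof (intro sum.cong refl)
    fix j
    show "norm (f z (2*j)) + norm (f z (2*j+1)) = (1 + 1/norm(1+z)) * norm (f (z^2) j)"
      unfolding f_def p_even p_odd tm_even tm_odd
      by (simp add: norm_divide norm_mult norm_power norm_inverse divide_inverse inverse_mult_distrib, simp add: algebra_simps)
  qed
  finally show ?thesis by (simp add: sum_distrib_left)
qed

lemma A_prod: "(\<Sum>n<2^N. norm (f z n)) = (\<Prod>k<N. 1 + 1/norm(1 + z^(2^k)))"
proof (induction N arbitrary: z)
  case 0
  then show ?case by (simp add: f_def p0 thue_morse_def bc0)
next
  case (Suc N)
  show ?case
    unfolding A_step Suc.IH prod.lessThan_Suc_shift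
    by (simp add: power_mult[symmetric] mult.commute)
qed


lemma geo_half: "(\<Sum>k<N. (1/2::real)^k) = 2 - 2*(1/2)^N"
  by (induction N) auto

lemma term_bound:
  fixes z :: complex
  assumes "norm z > 1"
  shows "1/norm(1 + z^(2^k)) \<le> (1/2)^k / (norm z - 1)"
proof -
  let ?r = "norm z"
  have "1 + real (2^k) * (?r - 1) \<le> (1 + (?r - 1))^(2^k)"
    by (rule Bernoulli_inequality) (use assms in simp)
  then have b: "2^k * (?r - 1) \<le> ?r^(2^k) - 1" by simp
  have "norm (z^(2^k)) = norm ((1 + z^(2^k)) + (-1))" by simp
  also have "\<dots> \<le> norm (1 + z^(2^k)) + norm (-1::complex)" by (rule norm_triangle_ineq)
  finally have "?r^(2^k) - 1 \<le> norm (1 + z^(2^k))" by (simp add: norm_power)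
  with b have c: "2^k * (?r - 1) \<le> norm (1 + z^(2^k))" by linarith
  have pos: "0 < 2^k * (?r - 1)" using assms by simp
  have "1/norm(1 + z^(2^k)) \<le> 1/(2^k * (?r - 1))"
    proof (rule divide_left_mono)
    show "0 < norm (1 + z^(2^k)) * (2^k * (?r - 1))" using c pos by (intro mult_pos_pos[OF _ pos]) linarith
  qed (use c in auto)
  also have "\<dots> = (1/2)^k / (?r - 1)" by (simp add: power_one_over)
  finally show ?thesis .
qed

lemma A_bound:
  assumes "norm z > 1"
  shows "(\<Sum>n<2^N. norm (f z n)) \<le> exp (2 / (norm z - 1))"
proof -
  have "(\<Sum>n<2^N. norm (f z n)) = (\<Prod>k<N. 1 + 1/norm(1 + z^(2^k)))" by (rule A_prod)
  also have "\<dots> \<le> (\<Prod>k<N. exp (1/norm(1 + z^(2^k))))"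
    by (intro prod_mono) (auto simp: add_nonneg_nonneg)
  also have "\<dots> = exp (\<Sum>k<N. 1/norm(1 + z^(2^k)))" by (simp add: exp_sum)
  also have "\<dots> \<le> exp (\<Sum>k<N. (1/2)^k / (norm z - 1))"
    using term_bound[OF assms] by (intro exp_mono sum_mono) auto
  also have "(\<Sum>k<N. (1/2::real)^k / (norm z - 1)) = (2 - 2*(1/2)^N) / (norm z - 1)"
    by (simp add: sum_divide_distrib[symmetric] geo_half)
  also have "\<dots> \<le> 2 / (norm z - 1)"
    using assms by (intro divide_right_mono) auto
  finally show ?thesis by simp
qed

theorem mainTheorem15:
  fixes z :: complex
  assumes "norm z > 1"
  shows "(\<lambda>n. (-1) ^ thue_morse n / p n z) sums (1 - 1 / z)"
proof -
  have fe: "(\<lambda>n. (-1) ^ thue_morse n / p n z) = f z" by (simp add: f_def fun_eq_iff)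
  have "summable (\<lambda>n. norm (f z n))"
  proof (rule summableI_nonneg_bounded)
    fix M :: nat
    have "(\<Sum>n<M. norm (f z n)) \<le> (\<Sum>n<2^M. norm (f z n))"
      by (intro sum_mono2) (auto intro: less_imp_le_nat[OF less_exp] order.trans)
    also have "\<dots> \<le> exp (2 / (norm z - 1))" by (rule A_bound[OF assms])
    finally show "(\<Sum>n<M. norm (f z n)) \<le> exp (2 / (norm z - 1))" .
  qed simp
  then have "summable (f z)" by (rule summable_norm_cancel)
  then have L: "(\<lambda>N. \<Sum>n<N. f z n) \<longlonglongrightarrow> suminf (f z)"
    using summable_sums sums_def by blast
  have sm: "strict_mono (\<lambda>N::nat. 2^N :: nat)"
    by (rule strict_monoI) simp
  have L1: "(\<lambda>N. \<Sum>n<2^N. f z n) \<longlonglongrightarrow> suminf (f z)"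
    using LIMSEQ_subseq_LIMSEQ[OF L sm] by (simp add: o_def)
  have w: "norm (1/z) < 1" using assms by (simp add: norm_divide divide_less_eq)
  have "(\<lambda>N. (1/z)^(2^N)) \<longlonglongrightarrow> 0"
    using LIMSEQ_subseq_LIMSEQ[OF LIMSEQ_power_zero[OF w] sm] by (simp add: o_def)
  then have "(\<lambda>N. (1 - 1/z) / (1 - (1/z)^(2^N))) \<longlonglongrightarrow> (1 - 1/z) / (1 - 0)"
    by (intro tendsto_intros) auto
  then have L2: "(\<lambda>N. \<Sum>n<2^N. f z n) \<longlonglongrightarrow> 1 - 1/z"
    using T_closed[OF assms] by simp
  have "suminf (f z) = 1 - 1/z" using LIMSEQ_unique[OF L1 L2] .
  then show ?thesis unfolding fe using \<open>summable (f z)\<close> summable_sums by fastforce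
qed

end
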